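(* Let $G\in\mathcal{F}$ with adjacency matrix $A$, and let $x,y$ be two distinct non-adjacent vertices of $G$. Let $S$ be the $2\times 2$ principal submatrix of $A^2-A-2I$ indexed by $x,y$, that is, $S=\begin{bmatrix} d_x-2 & d_{xy}\\ d_{xy} & d_y-2\end{bmatrix}$. Then $S$ is positive semi-definite, and $\det S=(d_x-2)(d_y-2)-d_{xy}^2\geq 0$.
   Context: Graphs are finite and simple; spectrum means adjacency spectrum. $\mathcal{F}$ denotes the set of connected graphs whose spectrum consists of exactly one eigenvalue $r>2$, exactly one eigenvalue $s<-1$, and all remaining eigenvalues (with multiplicity) equal to $2$ or $-1$. $d_v$ is the degree of $v$ and $d_{uv}$ is the number of common neighbors of $u$ and $v$. *)

theory Defs
  imports "Jordan_Normal_Form.Determinant" "Jordan_Normal_Form.Char_Poly" "HOL-Library.Multiset"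
begin

definition simple_graph :: "nat \<Rightarrow> (nat \<Rightarrow> nat \<Rightarrow> bool) \<Rightarrow> bool" where
  "simple_graph n E \<longleftrightarrow> (\<forall>i j. E i j \<longrightarrow> i < n \<and> j < n) \<and> (\<forall>i j. E i j \<longrightarrow> E j i) \<and> (\<forall>i. \<not> E i i)"

definition connected_graph :: "nat \<Rightarrow> (nat \<Rightarrow> nat \<Rightarrow> bool) \<Rightarrow> bool" where
  "connected_graph n E \<longleftrightarrow> n > 0 \<and> (\<forall>i<n. \<forall>j<n. E\<^sup>*\<^sup>* i j)"

definition adj_matrix :: "nat \<Rightarrow> (nat \<Rightarrow> nat \<Rightarrow> bool) \<Rightarrow> real mat" where
  "adj_matrix n E = mat n n (\<lambda>(i,j). if E i j then 1 else 0)"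

definition degree :: "nat \<Rightarrow> (nat \<Rightarrow> nat \<Rightarrow> bool) \<Rightarrow> nat \<Rightarrow> nat" where
  "degree n E v = card {w. w < n \<and> E v w}"

definition common_nbrs :: "nat \<Rightarrow> (nat \<Rightarrow> nat \<Rightarrow> bool) \<Rightarrow> nat \<Rightarrow> nat \<Rightarrow> nat" where
  "common_nbrs n E u v = card {w. w < n \<and> E u w \<and> E v w}"

text \<open>M is the spectrum (eigenvalues with multiplicity) of the square matrix A:
  the characteristic polynomial is the product of (X - lambda) over M.\<close>
definition spectrum_mset :: "real mat \<Rightarrow> real multiset \<Rightarrow> bool" where
  "spectrum_mset A M \<longleftrightarrow> char_poly A = prod_mset (image_mset (\<lambda>a. [:-a, 1:]) M)"

definition in_F :: "nat \<Rightarrow> (nat \<Rightarrow> nat \<Rightarrow> bool) \<Rightarrow> bool" where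
  "in_F n E \<longleftrightarrow> simple_graph n E \<and> connected_graph n E \<and>
     (\<exists>r s a b. r > 2 \<and> s < -1 \<and>
        spectrum_mset (adj_matrix n E) ({#r, s#} + replicate_mset a 2 + replicate_mset b (-1)))"

definition psd :: "real mat \<Rightarrow> bool" where
  "psd S \<longleftrightarrow> S \<in> carrier_mat (dim_row S) (dim_row S) \<and> S\<^sup>T = S \<and>
     (\<forall>v \<in> carrier_vec (dim_row S). v \<bullet> (S *\<^sub>v v) \<ge> 0)"

definition principal2 :: "real mat \<Rightarrow> nat \<Rightarrow> nat \<Rightarrow> real mat" where
  "principal2 B x y = mat 2 2 (\<lambda>(i,j). B $$ ((if i = 0 then x else y), (if j = 0 then x else y)))"

end

theory Submission
  imports Defs "Jordan_Normal_Form.Jordan_Normal_Form_Uniqueness" "Jordan_Normal_Form.Jordan_Normal_Form_Existence"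
begin

lemma sym_scalar:
  fixes M :: "real mat"
  assumes M: "M \<in> carrier_mat n n" and sym: "\<And>i j. i < n \<Longrightarrow> j < n \<Longrightarrow> M $$ (i,j) = M $$ (j,i)"
    and x: "x \<in> carrier_vec n" and y: "y \<in> carrier_vec n"
  shows "(M *\<^sub>v x) \<bullet> y = x \<bullet> (M *\<^sub>v y)"
proof -
  have "(M *\<^sub>v x) \<bullet> y = (\<Sum>i<n. (\<Sum>j<n. M $$ (i,j) * x $ j) * y $ i)"
    using M x y by (simp add: scalar_prod_def mult_mat_vec_def row_def atLeast0LessThan)
  also have "\<dots> = (\<Sum>i<n. \<Sum>j<n. M $$ (i,j) * x $ j * y $ i)" by (simp add: sum_distrib_right)
  also have "\<dots> = (\<Sum>j<n. \<Sum>i<n. M $$ (i,j) * x $ j * y $ i)" by (rule sum.swap)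
  also have "\<dots> = (\<Sum>j<n. x $ j * (\<Sum>i<n. M $$ (j,i) * y $ i))"
    by (rule sum.cong, simp, simp add: sum_distrib_left sym mult.commute mult.left_commute)
  also have "\<dots> = x \<bullet> (M *\<^sub>v y)"
    using M x y by (simp add: scalar_prod_def mult_mat_vec_def row_def atLeast0LessThan)
  finally show ?thesis .
qed

lemma kernel_step:
  fixes M :: "real mat"
  assumes M: "M \<in> carrier_mat n n" and sym: "\<And>i j. i < n \<Longrightarrow> j < n \<Longrightarrow> M $$ (i,j) = M $$ (j,i)"
    and w: "w \<in> carrier_vec n" and z: "M *\<^sub>v (M *\<^sub>v w) = 0\<^sub>v n"
  shows "M *\<^sub>v w = 0\<^sub>v n"
proof -
  have "(M *\<^sub>v w) \<bullet> (M *\<^sub>v w) = w \<bullet> (M *\<^sub>v (M *\<^sub>v w))"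
    by (rule sym_scalar[OF M sym w], insert M w, auto)
  also have "\<dots> = 0" using z w by simp
  finally have s0: "(M *\<^sub>v w) \<bullet> (M *\<^sub>v w) = 0" .
  have dM: "dim_row M = n" using M by auto
  have "(\<Sum>i\<in>{0..<n}. (M *\<^sub>v w) $ i * (M *\<^sub>v w) $ i) = 0"
    using s0 dM by (simp add: scalar_prod_def)
  hence all0: "\<forall>i\<in>{0..<n}. (M *\<^sub>v w) $ i * (M *\<^sub>v w) $ i = 0"
    by (subst sum_nonneg_eq_0_iff[symmetric]) auto
  show ?thesis
  proof (rule eq_vecI)
    fix i assume "i < dim_vec (0\<^sub>v n :: real vec)"
    hence "i < n" by simp
    thus "(M *\<^sub>v w) $ i = 0\<^sub>v n $ i" using all0 by simp
  qed (use dM in simp)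
qed

lemma kernel_pow:
  fixes M :: "real mat"
  assumes M: "M \<in> carrier_mat n n" and sym: "\<And>i j. i < n \<Longrightarrow> j < n \<Longrightarrow> M $$ (i,j) = M $$ (j,i)"
  shows "v \<in> carrier_vec n \<Longrightarrow> (M ^\<^sub>m (Suc k)) *\<^sub>v v = 0\<^sub>v n \<Longrightarrow> M *\<^sub>v v = 0\<^sub>v n"
proof (induct k arbitrary: v)
  case 0
  then show ?case using M by simp
next
  case (Suc k)
  have "M ^\<^sub>m (Suc (Suc k)) *\<^sub>v v = (M ^\<^sub>m (Suc k) * M) *\<^sub>v v"
    by (simp only: pow_mat.simps)
  also have "\<dots> = M ^\<^sub>m (Suc k) *\<^sub>v (M *\<^sub>v v)"
    by (rule assoc_mult_mat_vec, insert M Suc.prems, auto)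
  finally have "M ^\<^sub>m (Suc (Suc k)) *\<^sub>v v = M ^\<^sub>m (Suc k) *\<^sub>v (M *\<^sub>v v)" .
  hence "M *\<^sub>v (M *\<^sub>v v) = 0\<^sub>v n" using Suc M by auto
  thus ?case using kernel_step[OF M _ Suc.prems(1)] sym by blast
qed

lemma dim_gen_const:
  fixes A :: "real mat"
  assumes A: "A \<in> carrier_mat n n" and sym: "\<And>i j. i < n \<Longrightarrow> j < n \<Longrightarrow> A $$ (i,j) = A $$ (j,i)"
    and k: "k \<ge> 1"
  shows "dim_gen_eigenspace A ev k = dim_gen_eigenspace A ev 1"
proof -
  define M where "M = char_matrix A ev"
  have M: "M \<in> carrier_mat n n" unfolding M_def using A by simp
  have symM: "\<And>i j. i < n \<Longrightarrow> j < n \<Longrightarrow> M $$ (i,j) = M $$ (j,i)"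
    unfolding M_def char_matrix_def using A sym by auto
  obtain k1 where k1: "k = Suc k1" using k by (cases k, auto)
  have "mat_kernel (M ^\<^sub>m k) = mat_kernel M"
  proof
    show "mat_kernel (M ^\<^sub>m k) \<subseteq> mat_kernel M"
    proof
      fix v assume "v \<in> mat_kernel (M ^\<^sub>m k)"
      moreover have Mk: "M ^\<^sub>m k \<in> carrier_mat n n" using M by simp
      ultimately have v: "v \<in> carrier_vec n" "M ^\<^sub>m (Suc k1) *\<^sub>v v = 0\<^sub>v n"
        using mat_kernelD[OF Mk] k1 by auto
      from kernel_pow[OF M symM v] show "v \<in> mat_kernel M"
        by (intro mat_kernelI[OF M v(1)])
    qed
    show "mat_kernel M \<subseteq> mat_kernel (M ^\<^sub>m k)"
    proof
      fix v assume "v \<in> mat_kernel M"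
      hence v: "v \<in> carrier_vec n" "M *\<^sub>v v = 0\<^sub>v n"
        using mat_kernelD[of M n n v] M by auto
      have "M ^\<^sub>m (Suc k1) *\<^sub>v v = (M ^\<^sub>m k1 * M) *\<^sub>v v"
        by (simp only: pow_mat.simps)
      also have "\<dots> = M ^\<^sub>m k1 *\<^sub>v (M *\<^sub>v v)"
        by (rule assoc_mult_mat_vec, insert M v, auto)
      also have "\<dots> = 0\<^sub>v n"
      proof -
        have "M ^\<^sub>m k1 \<in> carrier_mat n n" using M by simp
        hence "M ^\<^sub>m k1 *\<^sub>v 0\<^sub>v n = 0\<^sub>v n" by (intro eq_vecI, auto simp: scalar_prod_def)
        thus ?thesis using v(2) by simp
      qed
      finally show "v \<in> mat_kernel (M ^\<^sub>m k)"
        using k1 M v by (intro mat_kernelI[of _ n n], auto)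
    qed
  qed
  moreover have "M ^\<^sub>m 1 = M" using M by simp
  ultimately show ?thesis
    unfolding dim_gen_eigenspace_def kernel_dim_def M_def[symmetric] using M
    by simp
qed

lemma jnf_blocks_one:
  fixes A :: "real mat"
  assumes A: "A \<in> carrier_mat n n" and sym: "\<And>i j. i < n \<Longrightarrow> j < n \<Longrightarrow> A $$ (i,j) = A $$ (j,i)"
    and jnf: "jordan_nf A n_as" and mem: "(k,a) \<in> set n_as"
  shows "k = 1"
proof (rule ccontr)
  assume "k \<noteq> 1"
  moreover have "k \<noteq> 0" using jnf mem unfolding jordan_nf_def by force
  ultimately have k2: "k \<ge> 2" by simp
  have "compute_nr_of_jordan_blocks A a k = length (filter ((=) (k, a)) n_as)"
    by (rule compute_nr_of_jordan_blocks[OF jnf], insert k2, simp)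
  moreover have "length (filter ((=) (k, a)) n_as) > 0"
    using mem by (simp add: length_filter_conv_card card_gt_0_iff) (metis in_set_conv_nth)
  moreover have "compute_nr_of_jordan_blocks A a k = 0"
    unfolding compute_nr_of_jordan_blocks_def
    using dim_gen_const[OF A sym, of k a] dim_gen_const[OF A sym, of "k - 1" a]
      dim_gen_const[OF A sym, of "Suc k" a] k2 by simp
  ultimately show False by simp
qed

lemma jm_diag:
  assumes "\<And>k a. (k,a) \<in> set n_as \<Longrightarrow> k = 1"
  shows "jordan_matrix n_as = mat (length n_as) (length n_as) (\<lambda>(i,j). if i = j then snd (n_as ! i) else (0::'a::{zero,one}))"
  using assms
proof (induct n_as)
  case Nil
  then show ?case by (auto simp: jordan_matrix_def)
next
  case (Cons ka rest)
  obtain k a where ka: "ka = (k,a)" by force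
  with Cons have k: "k = 1" by auto
  have IH: "jordan_matrix rest = mat (length rest) (length rest) (\<lambda>(i,j). if i = j then snd (rest ! i) else 0)"
    using Cons by auto
  have "jordan_matrix (ka # rest) = four_block_mat (jordan_block 1 a) (0\<^sub>m 1 (length rest)) (0\<^sub>m (length rest) 1) (jordan_matrix rest)"
    unfolding ka k jordan_matrix_def by (simp add: Let_def jordan_matrix_def[symmetric] IH)
  also have "\<dots> = mat (length (ka # rest)) (length (ka # rest)) (\<lambda>(i,j). if i = j then snd ((ka # rest) ! i) else 0)"
    by (rule eq_matI, auto simp: IH ka nth_Cons')
  finally show ?case .
qed

lemma eig_orth:
  fixes A :: "real mat"
  assumes A: "A \<in> carrier_mat n n" and sym: "\<And>i j. i < n \<Longrightarrow> j < n \<Longrightarrow> A $$ (i,j) = A $$ (j,i)"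
    and x: "x \<in> carrier_vec n" and y: "y \<in> carrier_vec n"
    and ex: "A *\<^sub>v x = l \<cdot>\<^sub>v x" and ey: "A *\<^sub>v y = m \<cdot>\<^sub>v y" and lm: "l \<noteq> m"
  shows "x \<bullet> y = 0"
proof -
  have "l * (x \<bullet> y) = (A *\<^sub>v x) \<bullet> y" using ex x y by simp
  also have "\<dots> = x \<bullet> (A *\<^sub>v y)" by (rule sym_scalar[OF A sym x y])
  also have "\<dots> = m * (x \<bullet> y)" using ey x y by simp
  finally show ?thesis using lm by simp
qed

lemma B_eig:
  fixes A :: "real mat"
  assumes A: "A \<in> carrier_mat n n" and u: "u \<in> carrier_vec n" and e: "A *\<^sub>v u = l \<cdot>\<^sub>v u"
  shows "(A * A - A - 2 \<cdot>\<^sub>m 1\<^sub>m n) *\<^sub>v u = (l * l - l - 2) \<cdot>\<^sub>v u"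
proof -
  have AA: "A * A \<in> carrier_mat n n" using A by simp
  have "(A * A - A - 2 \<cdot>\<^sub>m 1\<^sub>m n) *\<^sub>v u = (A * A - A) *\<^sub>v u - (2 \<cdot>\<^sub>m 1\<^sub>m n) *\<^sub>v u"
    by (rule minus_mult_distrib_mat_vec, insert A u, auto)
  also have "(A * A - A) *\<^sub>v u = (A * A) *\<^sub>v u - A *\<^sub>v u"
    by (rule minus_mult_distrib_mat_vec, insert A u, auto)
  also have "(A * A) *\<^sub>v u = A *\<^sub>v (A *\<^sub>v u)" using A u by simp
  also have "\<dots> = l \<cdot>\<^sub>v (l \<cdot>\<^sub>v u)" unfolding e using mult_mat_vec[OF A u] e by simp
  also have "(2 \<cdot>\<^sub>m 1\<^sub>m n) *\<^sub>v u = 2 \<cdot>\<^sub>v u" using u by (intro eq_vecI, auto)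
  finally show ?thesis unfolding e using u by (intro eq_vecI, auto simp: algebra_simps)
qed

lemma poly_jordan_root:
  assumes "(k,d) \<in> set xs" "k > 0"
  shows "poly (\<Prod>(k,a)\<leftarrow>xs. [:- a, 1:] ^ k) d = (0::real)"
  using assms
proof (induct xs)
  case (Cons ka xs)
  obtain k' a' where ka: "ka = (k',a')" by force
  show ?case using Cons unfolding ka by (auto simp: zero_power)
qed simp

lemma expand4:
  fixes x1 x2 x3 x4 :: "real vec"
  assumes c: "x1 \<in> carrier_vec n" "x2 \<in> carrier_vec n" "x3 \<in> carrier_vec n" "x4 \<in> carrier_vec n"
  and o: "x1 \<bullet> x2 = 0" "x1 \<bullet> x3 = 0" "x1 \<bullet> x4 = 0" "x2 \<bullet> x3 = 0" "x2 \<bullet> x4 = 0" "x3 \<bullet> x4 = 0"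
  shows "(x1 + x2 + x3 + x4) \<bullet> (c1 \<cdot>\<^sub>v x1 + c2 \<cdot>\<^sub>v x2 + c3 \<cdot>\<^sub>v x3 + c4 \<cdot>\<^sub>v x4)
     = c1 * (x1 \<bullet> x1) + c2 * (x2 \<bullet> x2) + c3 * (x3 \<bullet> x3) + c4 * (x4 \<bullet> x4)"
proof -
  have o2: "x2 \<bullet> x1 = 0" "x3 \<bullet> x1 = 0" "x4 \<bullet> x1 = 0" "x3 \<bullet> x2 = 0" "x4 \<bullet> x2 = 0" "x4 \<bullet> x3 = 0"
    using o c by (simp_all add: comm_scalar_prod[of _ n])
  show ?thesis
    using c o o2 by (simp add: add_scalar_prod_distrib[of _ n] scalar_prod_add_distrib[of _ n])
qed
lemma quad_nonneg:
  fixes A :: "real mat"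
  assumes A: "A \<in> carrier_mat n n" and sym: "\<And>i j. i < n \<Longrightarrow> j < n \<Longrightarrow> A $$ (i,j) = A $$ (j,i)"
    and cp: "char_poly A = prod_mset (image_mset (\<lambda>a. [:-a, 1:]) ({#r, s#} + replicate_mset a 2 + replicate_mset b (-1)))"
    and r: "r > 2" and s: "s < -1" and v: "v \<in> carrier_vec n"
  shows "v \<bullet> ((A * A - A - 2 \<cdot>\<^sub>m 1\<^sub>m n) *\<^sub>v v) \<ge> 0"
proof -
  define Mset where "Mset = {#r, s#} + replicate_mset a 2 + replicate_mset b (-1::real)"
  obtain xs where xs: "mset xs = Mset" using ex_mset by blast
  have cp2: "char_poly A = (\<Prod>a\<leftarrow>xs. [:- a, 1:])"
    unfolding cp Mset_def[symmetric] xs[symmetric]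
    by (simp add: prod_mset_prod_list[symmetric])
  obtain n_as where jnf: "jordan_nf A n_as" using jordan_nf_exists[OF A cp2] by blast
  define J where "J = jordan_matrix n_as"
  obtain P Q where sim: "similar_mat_wit A J P Q"
    using jnf unfolding jordan_nf_def similar_mat_def J_def by blast
  note simD = similar_mat_witD2[OF A sim]
  have P: "P \<in> carrier_mat n n" and Q: "Q \<in> carrier_mat n n" and Jc: "J \<in> carrier_mat n n"
    using simD by auto
  have one: "\<And>k a. (k,a) \<in> set n_as \<Longrightarrow> k = 1" using jnf_blocks_one[OF A sym jnf] by blast
  have Jdef: "J = mat (length n_as) (length n_as) (\<lambda>(i,j). if i = j then snd (n_as ! i) else 0)"
    unfolding J_def by (rule jm_diag, rule one)
  hence len: "length n_as = n" using Jc by auto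
  define d where "d = (\<lambda>i. snd (n_as ! i))"
  have Jmult: "\<And>w. w \<in> carrier_vec n \<Longrightarrow> J *\<^sub>v w = vec n (\<lambda>i. d i * w $ i)"
  proof -
    fix w :: "real vec" assume w: "w \<in> carrier_vec n"
    show "J *\<^sub>v w = vec n (\<lambda>i. d i * w $ i)"
    proof (rule eq_vecI)
      show "dim_vec (J *\<^sub>v w) = dim_vec (vec n (\<lambda>i. d i * w $ i))" using Jc by simp
      fix i assume "i < dim_vec (vec n (\<lambda>i. d i * w $ i))"
      hence i: "i < n" by simp
      have "(J *\<^sub>v w) $ i = (\<Sum>j\<in>{0..<n}. (if i = j then d i else 0) * w $ j)"
        using i w len unfolding Jdef d_def by (simp add: scalar_prod_def)
      also have "\<dots> = d i * w $ i" using i by (simp add: if_distrib[of "\<lambda>x. x * _"] cong: if_cong)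
      finally show "(J *\<^sub>v w) $ i = vec n (\<lambda>i. d i * w $ i) $ i" using i by simp
    qed
  qed
  have droot: "\<And>i. i < n \<Longrightarrow> d i \<in># Mset"
  proof -
    fix i assume i: "i < n"
    have mem: "(1, d i) \<in> set n_as"
      using one[of "fst (n_as ! i)" "d i"] i len unfolding d_def by (metis nth_mem prod.collapse)
    have "poly (char_poly A) (d i) = 0"
      unfolding jordan_nf_char_poly[OF jnf] by (rule poly_jordan_root[OF mem], simp)
    hence "prod_mset (image_mset (\<lambda>a. d i - a) Mset) = 0"
      unfolding cp Mset_def[symmetric] poly_prod_mset by simp
    thus "d i \<in># Mset" by (auto simp: prod_mset_zero_iff)
  qed
  have dcases: "\<And>i. i < n \<Longrightarrow> d i = r \<or> d i = s \<or> d i = 2 \<or> d i = -1"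
  proof -
    fix i assume "i < n"
    hence "d i \<in># Mset" by (rule droot)
    thus "d i = r \<or> d i = s \<or> d i = 2 \<or> d i = -1"
      unfolding Mset_def by (cases "a = 0"; cases "b = 0") auto
  qed
  have AP: "\<And>w. w \<in> carrier_vec n \<Longrightarrow> A *\<^sub>v (P *\<^sub>v w) = P *\<^sub>v (J *\<^sub>v w)"
  proof -
    fix w :: "real vec" assume w: "w \<in> carrier_vec n"
    have "A * P = P * J * Q * P" using simD by simp
    also have "\<dots> = P * J * (Q * P)" using P Q Jc by (simp add: assoc_mult_mat[of _ n n _ n _ n])
    also have "\<dots> = P * J" using simD P Jc by simp
    finally have "A * P = P * J" .
    hence "(A * P) *\<^sub>v w = (P * J) *\<^sub>v w" by simp
    thus "A *\<^sub>v (P *\<^sub>v w) = P *\<^sub>v (J *\<^sub>v w)" using A P Jc w by simp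
  qed
  define w where "w = Q *\<^sub>v v"
  have w: "w \<in> carrier_vec n" unfolding w_def using Q v by simp
  have vPw: "v = P *\<^sub>v w"
  proof -
    have "P *\<^sub>v w = (P * Q) *\<^sub>v v" unfolding w_def using P Q v by simp
    also have "\<dots> = v" using simD v by simp
    finally show ?thesis by simp
  qed
  define sel where "sel l = vec n (\<lambda>i. if d i = l then w $ i else 0)" for l
  have selc: "\<And>l. sel l \<in> carrier_vec n" unfolding sel_def by simp
  have dist: "r \<noteq> s" "r \<noteq> 2" "r \<noteq> -1" "s \<noteq> 2" "s \<noteq> -1" "(2::real) \<noteq> -1"
    using r s by auto
  have wsum: "w = sel r + sel s + sel 2 + sel (-1)"
  proof (rule eq_vecI)
    fix i assume "i < dim_vec (sel r + sel s + sel 2 + sel (-1))"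
    hence i: "i < n" unfolding sel_def by simp
    show "w $ i = (sel r + sel s + sel 2 + sel (-1)) $ i"
      using dcases[OF i] dist i selc by (auto simp: sel_def)
  qed (use w in \<open>simp add: sel_def\<close>)
  have Jsel: "\<And>l. J *\<^sub>v sel l = l \<cdot>\<^sub>v sel l"
    by (subst Jmult[OF selc], rule eq_vecI, auto simp: sel_def)
  define e where "e l = P *\<^sub>v sel l" for l
  have ec: "\<And>l. e l \<in> carrier_vec n" unfolding e_def using P selc by simp
  have eeig: "\<And>l. A *\<^sub>v e l = l \<cdot>\<^sub>v e l"
    unfolding e_def AP[OF selc] Jsel using mult_mat_vec[OF P selc] by simp
  have vsum: "v = e r + e s + e 2 + e (-1)"
    unfolding vPw wsum e_def using P selc
    by (simp add: mult_add_distrib_mat_vec[of P n n])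
  define B where "B = A * A - A - 2 \<cdot>\<^sub>m 1\<^sub>m n"
  define f where "f l = l * l - l - 2" for l :: real
  have Be: "\<And>l. B *\<^sub>v e l = f l \<cdot>\<^sub>v e l"
    unfolding B_def f_def by (rule B_eig[OF A ec eeig])
  have Bc: "B \<in> carrier_mat n n" unfolding B_def by (intro minus_carrier_mat, simp)
  have Bv: "B *\<^sub>v v = f r \<cdot>\<^sub>v e r + f s \<cdot>\<^sub>v e s + f 2 \<cdot>\<^sub>v e 2 + f (-1) \<cdot>\<^sub>v e (-1)"
    unfolding vsum using Bc ec by (simp add: mult_add_distrib_mat_vec[of B n n] Be)
  have orth: "\<And>l m. l \<noteq> m \<Longrightarrow> e l \<bullet> e m = 0"
    by (rule eig_orth[OF A sym ec ec eeig eeig])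
  have "v \<bullet> (B *\<^sub>v v) = f r * (e r \<bullet> e r) + f s * (e s \<bullet> e s) + f 2 * (e 2 \<bullet> e 2) + f (-1) * (e (-1) \<bullet> e (-1))"
    unfolding Bv unfolding vsum
    by (rule expand4[OF ec ec ec ec orth orth orth orth orth orth], (simp add: dist)+)
  also have "\<dots> = f r * (e r \<bullet> e r) + f s * (e s \<bullet> e s)" unfolding f_def by simp
  also have "\<dots> \<ge> 0"
  proof -
    have sq: "\<And>u :: real vec. u \<bullet> u \<ge> 0" by (simp add: scalar_prod_def sum_nonneg)
    have p1: "(r - 2) * (r + 1) > 0" using r by (intro mult_pos_pos) auto
    have e1: "f r = (r - 2) * (r + 1)" unfolding f_def by (simp add: algebra_simps)
    have p2: "(s - 2) * (s + 1) > 0" using s by (intro mult_neg_neg) auto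
    have e2: "f s = (s - 2) * (s + 1)" unfolding f_def by (simp add: algebra_simps)
    have "f r > 0" "f s > 0" using p1 e1 p2 e2 by simp_all
    thus ?thesis using sq[of "e r"] sq[of "e s"] by simp
  qed
  finally show ?thesis unfolding B_def .
qed

lemma det2:
  fixes M :: "real mat"
  assumes M: "M \<in> carrier_mat 2 2"
  shows "det M = M $$ (0,0) * M $$ (1,1) - M $$ (0,1) * M $$ (1,0)"
proof -
  have md: "\<And>i. mat_delete M i 0 \<in> carrier_mat 1 1" using mat_delete_carrier[OF M] by simp
  have "det M = (\<Sum>i<2. M $$ (i,0) * cofactor M i 0)"
    by (rule laplace_expansion_column[OF M], simp)
  also have "\<dots> = M $$ (0,0) * cofactor M 0 0 + M $$ (1,0) * cofactor M 1 0"
    by (simp add: numeral_2_eq_2)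
  also have "cofactor M 0 0 = M $$ (1,1)"
    unfolding cofactor_def using det_single[OF md[of 0]] M by (simp add: mat_delete_def)
  also have "cofactor M 1 0 = - M $$ (0,1)"
    unfolding cofactor_def using det_single[OF md[of 1]] M by (simp add: mat_delete_def)
  finally show ?thesis by (simp add: algebra_simps)
qed

lemma quad2:
  fixes M :: "real mat"
  assumes M: "M \<in> carrier_mat 2 2" and v: "v \<in> carrier_vec 2"
  shows "v \<bullet> (M *\<^sub>v v) = v $ 0 * (M $$ (0,0) * v $ 0 + M $$ (0,1) * v $ 1) + v $ 1 * (M $$ (1,0) * v $ 0 + M $$ (1,1) * v $ 1)"
proof -
  have sp: "\<And>a b :: real vec. dim_vec b = 2 \<Longrightarrow> a \<bullet> b = a $ 0 * b $ 0 + a $ 1 * b $ 1"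
    by (simp add: scalar_prod_def numeral_2_eq_2 atLeast0_lessThan_Suc)
  have Mv: "M *\<^sub>v v = vec 2 (\<lambda>i. row M i \<bullet> v)" using M by (simp add: mult_mat_vec_def)
  have r: "\<And>i. i < 2 \<Longrightarrow> row M i \<bullet> v = M $$ (i,0) * v $ 0 + M $$ (i,1) * v $ 1"
    using M v by (subst sp, auto)
  show ?thesis using M v unfolding Mv by (subst sp, auto simp: r)
qed

lemma sum2:
  fixes g :: "nat \<Rightarrow> real"
  assumes "x < n" "y < n" "x \<noteq> y"
  shows "(\<Sum>j\<in>{0..<n}. g j * ((if j = x then c else 0) + (if j = y then d else 0))) = g x * c + g y * d"
proof -
  have "(\<Sum>j\<in>{0..<n}. g j * ((if j = x then c else 0) + (if j = y then d else 0)))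
      = (\<Sum>j\<in>{0..<n}. (if j = x then g j * c else 0) + (if j = y then g j * d else 0))"
    by (rule sum.cong) (auto simp: algebra_simps)
  also have "\<dots> = g x * c + g y * d" using assms by (simp add: sum.distrib)
  finally show ?thesis .
qed

lemma quadn:
  fixes B :: "real mat"
  fixes c d :: real
  assumes B: "B \<in> carrier_mat n n" and xy: "x < n" "y < n" "x \<noteq> y"
  defines "u \<equiv> vec n (\<lambda>i. (if i = x then c else 0) + (if i = y then d else 0))"
  shows "u \<bullet> (B *\<^sub>v u) = c * (B $$ (x,x) * c + B $$ (x,y) * d) + d * (B $$ (y,x) * c + B $$ (y,y) * d)"
proof -
  have Bu: "\<And>i. i < n \<Longrightarrow> (B *\<^sub>v u) $ i = B $$ (i,x) * c + B $$ (i,y) * d"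
  proof -
    fix i assume i: "i < n"
    have "(B *\<^sub>v u) $ i = (\<Sum>j\<in>{0..<n}. B $$ (i,j) * ((if j = x then c else 0) + (if j = y then d else 0)))"
      using B i unfolding u_def by (simp add: scalar_prod_def row_def)
    also have "\<dots> = B $$ (i,x) * c + B $$ (i,y) * d" by (rule sum2[OF xy])
    finally show "(B *\<^sub>v u) $ i = B $$ (i,x) * c + B $$ (i,y) * d" .
  qed
  have "u \<bullet> (B *\<^sub>v u) = (\<Sum>j\<in>{0..<n}. (B *\<^sub>v u) $ j * ((if j = x then c else 0) + (if j = y then d else 0)))"
    using B unfolding u_def by (simp add: scalar_prod_def mult.commute)
  also have "\<dots> = (B *\<^sub>v u) $ x * c + (B *\<^sub>v u) $ y * d" by (rule sum2[OF xy])
  also have "\<dots> = c * (B $$ (x,x) * c + B $$ (x,y) * d) + d * (B $$ (y,x) * c + B $$ (y,y) * d)"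
    using Bu xy by (simp add: algebra_simps)
  finally show ?thesis .
qed

lemma psd2_det:
  fixes p q t :: real
  assumes "\<And>c d. c * (p * c + q * d) + d * (q * c + t * d) \<ge> 0"
  shows "p * t - q^2 \<ge> 0"
proof -
  have a1: "p \<ge> 0" using assms[of 1 0] by simp
  have a2: "t \<ge> 0" using assms[of 0 1] by simp
  have a3: "p * (p * t - q^2) \<ge> 0" using assms[of q "-p"] by (simp add: algebra_simps power2_eq_square)
  have a4: "t * (p * t - q^2) \<ge> 0" using assms[of t "-q"] by (simp add: algebra_simps power2_eq_square)
  have a5: "p + 2 * q + t \<ge> 0" using assms[of 1 1] by simp
  have a6: "p - 2 * q + t \<ge> 0" using assms[of 1 "-1"] by simp
  show ?thesis
  proof (rule ccontr)
    assume neg: "\<not> ?thesis"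
    hence "p = 0" using a1 a3 by (smt (verit) mult_pos_neg)
    moreover have "t = 0" using neg a2 a4 by (smt (verit) mult_pos_neg)
    ultimately have "q = 0" using a5 a6 by simp
    thus False using neg \<open>p = 0\<close> by simp
  qed
qed

theorem lemma4p2:
  fixes n :: nat and E :: "nat \<Rightarrow> nat \<Rightarrow> bool" and x y :: nat
  assumes "in_F n E"
    and "x < n" and "y < n" and "x \<noteq> y" and "\<not> E x y"
  defines "A \<equiv> adj_matrix n E"
  defines "S \<equiv> principal2 (A * A - A - 2 \<cdot>\<^sub>m 1\<^sub>m n) x y"
  shows "S = mat 2 2 (\<lambda>(i,j). if i = j then real (if i = 0 then degree n E x else degree n E y) - 2
                            else real (common_nbrs n E x y))
     \<and> psd S
     \<and> det S = (real (degree n E x) - 2) * (real (degree n E y) - 2) - real (common_nbrs n E x y)^2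
     \<and> det S \<ge> 0"
proof -
  note xn = assms(2) and yn = assms(3) and xy = assms(4) and nE = assms(5)
  from assms(1) have sg: "simple_graph n E"
    and ex: "\<exists>r s a b. r > 2 \<and> s < -1 \<and>
        spectrum_mset (adj_matrix n E) ({#r, s#} + replicate_mset a 2 + replicate_mset b (-1))"
    unfolding in_F_def by auto
  then obtain r s a b where r: "r > 2" and s: "s < -1"
    and sp: "spectrum_mset A ({#r, s#} + replicate_mset a 2 + replicate_mset b (-1))"
    unfolding A_def by blast
  have Esym: "\<And>i j. E i j \<Longrightarrow> E j i" and Eirr: "\<And>i. \<not> E i i"
    using sg unfolding simple_graph_def by auto
  have Ac: "A \<in> carrier_mat n n" unfolding A_def adj_matrix_def by simp
  have Aij: "\<And>i j. i < n \<Longrightarrow> j < n \<Longrightarrow> A $$ (i,j) = (if E i j then 1 else 0)"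
    unfolding A_def adj_matrix_def by simp
  have symA: "\<And>i j. i < n \<Longrightarrow> j < n \<Longrightarrow> A $$ (i,j) = A $$ (j,i)"
    using Aij Esym by metis
  define B where "B = A * A - A - 2 \<cdot>\<^sub>m 1\<^sub>m n"
  have Bc: "B \<in> carrier_mat n n" unfolding B_def by (intro minus_carrier_mat, simp)
  have AA: "\<And>u w. u < n \<Longrightarrow> w < n \<Longrightarrow> (A * A) $$ (u,w) = real (card {k. k < n \<and> E u k \<and> E w k})"
  proof -
    fix u w assume u: "u < n" and w: "w < n"
    have "(A * A) $$ (u,w) = (\<Sum>k\<in>{0..<n}. A $$ (u,k) * A $$ (k,w))"
      using Ac u w by (simp add: scalar_prod_def row_def col_def)
    also have "\<dots> = (\<Sum>k\<in>{0..<n}. if E u k \<and> E w k then 1 else 0)"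
      by (rule sum.cong, simp, insert u w Esym, auto simp: Aij)
    also have "\<dots> = real (card ({0..<n} \<inter> {k. E u k \<and> E w k}))"
      by (simp add: sum.If_cases)
    also have "{0..<n} \<inter> {k. E u k \<and> E w k} = {k. k < n \<and> E u k \<and> E w k}" by auto
    finally show "(A * A) $$ (u,w) = real (card {k. k < n \<and> E u k \<and> E w k})" .
  qed
  have Bij: "\<And>u w. u < n \<Longrightarrow> w < n \<Longrightarrow> B $$ (u,w) = real (card {k. k < n \<and> E u k \<and> E w k})
       - (if E u w then 1 else 0) - (if u = w then 2 else 0)"
  proof -
    fix u w assume u: "u < n" and w: "w < n"
    have "B $$ (u,w) = (A * A) $$ (u,w) - A $$ (u,w) - (2 \<cdot>\<^sub>m 1\<^sub>m n) $$ (u,w)"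
      unfolding B_def using Ac u w by simp
    also have "\<dots> = real (card {k. k < n \<and> E u k \<and> E w k}) - (if E u w then 1 else 0) - (if u = w then 2 else 0)"
      unfolding AA[OF u w] Aij[OF u w] using u w by simp
    finally show "B $$ (u,w) = real (card {k. k < n \<and> E u k \<and> E w k})
       - (if E u w then 1 else 0) - (if u = w then 2 else 0)" .
  qed
  have Bxx: "B $$ (x,x) = real (degree n E x) - 2"
    using Bij[OF xn xn] Eirr unfolding degree_def by simp
  have Byy: "B $$ (y,y) = real (degree n E y) - 2"
    using Bij[OF yn yn] Eirr unfolding degree_def by simp
  have Bxy: "B $$ (x,y) = real (common_nbrs n E x y)"
    using Bij[OF xn yn] nE xy unfolding common_nbrs_def by simp
  have Byx: "B $$ (y,x) = real (common_nbrs n E x y)"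
  proof -
    have "{k. k < n \<and> E y k \<and> E x k} = {k. k < n \<and> E x k \<and> E y k}" by auto
    thus ?thesis using Bij[OF yn xn] nE xy Esym unfolding common_nbrs_def by auto
  qed
  define p where "p = real (degree n E x) - 2"
  define q where "q = real (common_nbrs n E x y)"
  define t where "t = real (degree n E y) - 2"
  have SB: "S = principal2 B x y" unfolding S_def B_def ..
  have Sform: "S = mat 2 2 (\<lambda>(i,j). if i = j then real (if i = 0 then degree n E x else degree n E y) - 2
                            else real (common_nbrs n E x y))"
    unfolding SB principal2_def
    by (rule eq_matI, auto simp: Bxx Byy Bxy Byx less_2_cases_iff)
  have Sc: "S \<in> carrier_mat 2 2" unfolding Sform by simp
  have S00: "S $$ (0,0) = p" and S01: "S $$ (0,1) = q" and S10: "S $$ (1,0) = q" and S11: "S $$ (1,1) = t"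
    unfolding Sform p_def q_def t_def by simp_all
  have cp: "char_poly A = prod_mset (image_mset (\<lambda>a. [:-a, 1:]) ({#r, s#} + replicate_mset a 2 + replicate_mset b (-1)))"
    using sp unfolding spectrum_mset_def .
  have qf: "\<And>c d. c * (p * c + q * d) + d * (q * c + t * d) \<ge> 0"
  proof -
    fix c d :: real
    define u where "u = vec n (\<lambda>i. (if i = x then c else 0) + (if i = y then d else 0))"
    have uc: "u \<in> carrier_vec n" unfolding u_def by simp
    have "u \<bullet> (B *\<^sub>v u) \<ge> 0" unfolding B_def
      by (rule quad_nonneg[OF Ac symA cp r s uc])
    moreover have "u \<bullet> (B *\<^sub>v u) = c * (B $$ (x,x) * c + B $$ (x,y) * d) + d * (B $$ (y,x) * c + B $$ (y,y) * d)"
      unfolding u_def by (rule quadn[OF Bc xn yn xy])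
    ultimately show "c * (p * c + q * d) + d * (q * c + t * d) \<ge> 0"
      unfolding p_def q_def t_def using Bxx Byy Bxy Byx by simp
  qed
  have psdS: "psd S"
    unfolding psd_def
  proof (intro conjI ballI)
    show "S \<in> carrier_mat (dim_row S) (dim_row S)" using Sc by simp
    show "S\<^sup>T = S" unfolding Sform by (rule eq_matI, auto simp: less_2_cases_iff)
    fix v :: "real vec" assume "v \<in> carrier_vec (dim_row S)"
    hence v: "v \<in> carrier_vec 2" using Sc by simp
    show "v \<bullet> (S *\<^sub>v v) \<ge> 0"
      unfolding quad2[OF Sc v] S00 S01 S10 S11 by (rule qf)
  qed
  have detS: "det S = p * t - q^2"
    unfolding det2[OF Sc] S00 S01 S10 S11 by (simp add: power2_eq_square)
  have "p * t - q^2 \<ge> 0" by (rule psd2_det, rule qf)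
  thus ?thesis using Sform psdS detS unfolding p_def q_def t_def by simp
qed

end
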